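(* Let $\mathbf{R}^{\mathrm{o}}$ be a finite set of obligations and $\mathbf{R}=(\emptyset,\mathbf{R}^{\mathrm{o}})$. Let $a,x$ be Boolean formulas, let the overriding relation $\triangleright$ be computed relative to $\Gamma=\{\Diamond a\}$, and let entailment range over replete $\mathbf{R}$-ordered models. If $x\in\bigcap\mathit{outf}(\mathbf{R}^{\mathrm{o}}_{\triangleright},a,\{a\})$ (with underlying I/O operation $out_4^{+}$), then $(\{\Diamond a\},\mathbf{R})\mid\sim\bigcirc(x/a)$.
   Context: Boolean formulas are built from propositional letters with the classical connectives; $\models_{\mathrm{PL}}$ is classical propositional entailment, $\models_{\mathrm{S5}}$ entailment in S5; $\Diamond A$ abbreviates $\neg\Box\neg A$, and $w\models\Box A$ iff $A$ holds at every world of the model. An obligation is $\bigcirc(B/A)$ with $A,B$ Boolean; body $b(\bigcirc(B/A))=A$, head $h(\bigcirc(B/A))=B$. Overriding relative to $\Gamma$: $r_j\triangleright r_i$ iff (i) $\{h(r_i),h(r_j)\}\cup\Gamma\models_{\mathrm{S5}}\bot$; (ii) $b(r_j)\models_{\mathrm{PL}}b(r_i)$ and $b(r_i)\not\models_{\mathrm{PL}}b(r_j)$; (iii) $\{h(r_i),b(r_j)\}\not\models_{\mathrm{PL}}\bot$. An $\mathbf{R}$-ordered model (no normality conditionals) is $M=(W,\succeq_N,\succeq_I,v)$, $W\neq\emptyset$, $v$ a valuation, $\succeq_N=W\times W$, and $w_1\succeq_I w_2$ iff $V(w_1)\subseteq V(w_2)$, where $V(w)=\{r_i\in\mathbf{R}^{\mathrm{o}}: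 w\models b(r_i)\wedge\neg h(r_i)$ and $w\not\models b(r_j)$ for all $r_j\in\mathbf{R}^{\mathrm{o}}$ with $r_j\triangleright r_i\}$. $\max_{\succeq}(X)=\{w\in X:\forall u\in X(u\succeq w\Rightarrow w\succeq u)\}$; $\Vert A\Vert$ = set of worlds where $A$ holds. For $U,U'\subseteq W$, $U\succeq_I^{s}U'$ iff for every $u'\in U'$ there is $u\in U$ with $u\succeq_I u'$. Truth of obligations: $w\models\bigcirc(B/A)$ iff $\max_{\succeq_N}(\Vert A\wedge\neg B\Vert)\not\succeq_I^{s}\max_{\succeq_N}(\Vert A\wedge B\Vert)$. $M$ is replete if every PL-consistent Boolean formula holds at some world. $(\Gamma,\mathbf{R})\mid\sim\varphi$ iff in every (replete) $\mathbf{R}$-ordered model, every world satisfying all of $\Gamma$ satisfies $\varphi$. I/O logic: for a set $H$ of pairs of Boolean formulas, $\mathrm{m}(H)=\{a\rightarrow x:(a,x)\in H\}$, $out_4^{+}(H,a)=\{x:\{a\}\cup\mathrm{m}(H)\models_{\mathrm{PL}}x\}$; $\mathit{maxf}(N,a,C)$ is the set of $\subseteq$-maximal $H\subseteq N$ with $out_4^{+}(H,a)\cup C$ PL-consistent; $\mathit{outf}(N,a,C)=\{out_4^{+}(H,a):H\in\mathit{maxf}(N,a,C)\}$. Translation: for $r_i=\bigcirc(x/a)$, $D(r_i)=\{r_j\in\mathbf{R}^{\mathrm{o}}:r_j\triangleright r_i\}$, $r_i^{\triangleright}=(a\wedge\bigwedge_{r_j\in D(r_i)}\neg b(r_j),x)$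 if $D(r_i)\neq\emptyset$ and $(a,x)$ otherwise; $\mathbf{R}^{\mathrm{o}}_{\triangleright}=\{r^{\triangleright}:r\in\mathbf{R}^{\mathrm{o}}\}$. *)

theory Defs
  imports Main
begin

datatype 'p form = Var 'p | Neg "'p form" | And "'p form" "'p form"
  | Or "'p form" "'p form" | Imp "'p form" "'p form"

fun pl_sat :: "('p \<Rightarrow> bool) \<Rightarrow> 'p form \<Rightarrow> bool" where
  "pl_sat val (Var p) = val p"
| "pl_sat val (Neg A) = (\<not> pl_sat val A)"
| "pl_sat val (And A B) = (pl_sat val A \<and> pl_sat val B)"
| "pl_sat val (Or A B) = (pl_sat val A \<or> pl_sat val B)"
| "pl_sat val (Imp A B) = (pl_sat val A \<longrightarrow> pl_sat val B)"

definition pl_entails :: "'p form set \<Rightarrow> 'p form \<Rightarrow> bool" where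
  "pl_entails X x \<longleftrightarrow> (\<forall>val. (\<forall>y\<in>X. pl_sat val y) \<longrightarrow> pl_sat val x)"

definition pl_consistent :: "'p form set \<Rightarrow> bool" where
  "pl_consistent X \<longleftrightarrow> (\<exists>val. \<forall>y\<in>X. pl_sat val y)"

datatype 'p mform = MAtom 'p | MNeg "'p mform" | MAnd "'p mform" "'p mform"
  | MOr "'p mform" "'p mform" | MImp "'p mform" "'p mform" | MBox "'p mform"

fun embed :: "'p form \<Rightarrow> 'p mform" where
  "embed (Var p) = MAtom p"
| "embed (Neg A) = MNeg (embed A)"
| "embed (And A B) = MAnd (embed A) (embed B)"
| "embed (Or A B) = MOr (embed A) (embed B)"
| "embed (Imp A B) = MImp (embed A) (embed B)"

definition Dia :: "'p mform \<Rightarrow> 'p mform" where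
  "Dia A = MNeg (MBox (MNeg A))"

fun mtrue :: "'w set \<Rightarrow> ('w \<Rightarrow> 'p \<Rightarrow> bool) \<Rightarrow> 'w \<Rightarrow> 'p mform \<Rightarrow> bool" where
  "mtrue W v w (MAtom p) = v w p"
| "mtrue W v w (MNeg A) = (\<not> mtrue W v w A)"
| "mtrue W v w (MAnd A B) = (mtrue W v w A \<and> mtrue W v w B)"
| "mtrue W v w (MOr A B) = (mtrue W v w A \<or> mtrue W v w B)"
| "mtrue W v w (MImp A B) = (mtrue W v w A \<longrightarrow> mtrue W v w B)"
| "mtrue W v w (MBox A) = (\<forall>u\<in>W. mtrue W v u A)"

text \<open>S5 (universal models; w.l.o.g. worlds are valuations): Gamma entails falsum.\<close>
definition s5_inconsistent :: "'p mform set \<Rightarrow> bool" where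
  "s5_inconsistent G \<longleftrightarrow>
     (\<forall>W :: ('p \<Rightarrow> bool) set. \<forall>w\<in>W. \<not> (\<forall>g\<in>G. mtrue W (\<lambda>u. u) w g))"

text \<open>An obligation O(B/A) is represented as the pair (A, B).\<close>
type_synonym 'p obl = "'p form \<times> 'p form"

definition body :: "'p obl \<Rightarrow> 'p form" where "body r = fst r"
definition head :: "'p obl \<Rightarrow> 'p form" where "head r = snd r"

definition overrides :: "'p mform set \<Rightarrow> 'p obl \<Rightarrow> 'p obl \<Rightarrow> bool" where
  "overrides G rj ri \<longleftrightarrow>
     s5_inconsistent ({embed (head ri), embed (head rj)} \<union> G)
   \<and> pl_entails {body rj} (body ri) \<and> \<not> pl_entails {body ri} (body rj)
   \<and> pl_consistent {head ri, body rj}"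

definition Vset :: "'p mform set \<Rightarrow> 'p obl set \<Rightarrow> ('p \<Rightarrow> bool) \<Rightarrow> 'p obl set" where
  "Vset G Ro val = {ri \<in> Ro. pl_sat val (body ri) \<and> \<not> pl_sat val (head ri)
      \<and> (\<forall>rj\<in>Ro. overrides G rj ri \<longrightarrow> \<not> pl_sat val (body rj))}"

definition geN :: "'w set \<Rightarrow> 'w \<Rightarrow> 'w \<Rightarrow> bool" where
  "geN W w1 w2 \<longleftrightarrow> w1 \<in> W \<and> w2 \<in> W"

definition geI :: "'p mform set \<Rightarrow> 'p obl set \<Rightarrow> ('w \<Rightarrow> 'p \<Rightarrow> bool) \<Rightarrow> 'w \<Rightarrow> 'w \<Rightarrow> bool" where
  "geI G Ro v w1 w2 \<longleftrightarrow> Vset G Ro (v w1) \<subseteq> Vset G Ro (v w2)"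

definition maxrel :: "('w \<Rightarrow> 'w \<Rightarrow> bool) \<Rightarrow> 'w set \<Rightarrow> 'w set" where
  "maxrel R X = {w \<in> X. \<forall>u\<in>X. R u w \<longrightarrow> R w u}"

definition ext :: "'w set \<Rightarrow> ('w \<Rightarrow> 'p \<Rightarrow> bool) \<Rightarrow> 'p form \<Rightarrow> 'w set" where
  "ext W v A = {w \<in> W. pl_sat (v w) A}"

definition strong_ge :: "('w \<Rightarrow> 'w \<Rightarrow> bool) \<Rightarrow> 'w set \<Rightarrow> 'w set \<Rightarrow> bool" where
  "strong_ge R U U' \<longleftrightarrow> (\<forall>u'\<in>U'. \<exists>u\<in>U. R u u')"

text \<open>w |= O(B/A) in the R-ordered model (W, v), overriding relative to G.\<close>
definition obl_true :: "'p mform set \<Rightarrow> 'p obl set \<Rightarrow> 'w set \<Rightarrow> ('w \<Rightarrow> 'p \<Rightarrow> bool) \<Rightarrow> 'w \<Rightarrow> 'p obl \<Rightarrow> bool" where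
  "obl_true G Ro W v w r \<longleftrightarrow>
     \<not> strong_ge (geI G Ro v)
         (maxrel (geN W) (ext W v (And (body r) (Neg (head r)))))
         (maxrel (geN W) (ext W v (And (body r) (head r))))"

definition replete :: "'w set \<Rightarrow> ('w \<Rightarrow> 'p \<Rightarrow> bool) \<Rightarrow> bool" where
  "replete W v \<longleftrightarrow> (\<forall>A. pl_consistent {A} \<longrightarrow> (\<exists>w\<in>W. pl_sat (v w) A))"

definition mat :: "'p obl set \<Rightarrow> 'p form set" where
  "mat H = (\<lambda>(a, x). Imp a x) ` H"

definition out4p :: "'p obl set \<Rightarrow> 'p form \<Rightarrow> 'p form set" where
  "out4p H a = {x. pl_entails ({a} \<union> mat H) x}"

definition maxf :: "'p obl set \<Rightarrow> 'p form \<Rightarrow> 'p form set \<Rightarrow> 'p obl set set" where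
  "maxf N a C = {H. H \<subseteq> N \<and> pl_consistent (out4p H a \<union> C)
      \<and> (\<forall>H'. H \<subset> H' \<and> H' \<subseteq> N \<longrightarrow> \<not> pl_consistent (out4p H' a \<union> C))}"

definition outf :: "'p obl set \<Rightarrow> 'p form \<Rightarrow> 'p form set \<Rightarrow> 'p form set set" where
  "outf N a C = (\<lambda>H. out4p H a) ` maxf N a C"

definition Dov :: "'p mform set \<Rightarrow> 'p obl set \<Rightarrow> 'p obl \<Rightarrow> 'p obl set" where
  "Dov G Ro ri = {rj \<in> Ro. overrides G rj ri}"

text \<open>a \<and> (conjunction of negated bodies of the overriders), using some enumeration
  of the finite set D(ri).\<close>
definition transl :: "'p mform set \<Rightarrow> 'p obl set \<Rightarrow> 'p obl \<Rightarrow> 'p obl" where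
  "transl G Ro ri =
     (if Dov G Ro ri \<noteq> {}
      then (foldr (\<lambda>rj acc. And acc (Neg (body rj)))
              (SOME xs. set xs = Dov G Ro ri \<and> distinct xs) (body ri), head ri)
      else (body ri, head ri))"

definition transl_set :: "'p mform set \<Rightarrow> 'p obl set \<Rightarrow> 'p obl set" where
  "transl_set G Ro = transl G Ro ` Ro"

end

theory Submission
  imports Defs
begin

lemma embed_sat: "mtrue W v u (embed A) = pl_sat (v u) A"
  by (induction A) auto

lemma foldr_sat: "pl_sat val (foldr (\<lambda>rj acc. And acc (Neg (body rj))) xs b)
   = (pl_sat val b \<and> (\<forall>rj\<in>set xs. \<not> pl_sat val (body rj)))"
  by (induction xs) auto

definition conjl :: "'p form list \<Rightarrow> 'p form \<Rightarrow> 'p form" where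
  "conjl xs a = foldr (\<lambda>y acc. And y acc) xs a"

lemma conjl_sat: "pl_sat val (conjl xs a) = (pl_sat val a \<and> (\<forall>y\<in>set xs. pl_sat val y))"
  unfolding conjl_def by (induction xs) auto

lemma transl_sat:
  assumes "finite Ro"
  shows "pl_sat val (fst (transl G Ro r)) =
     (pl_sat val (body r) \<and> (\<forall>rj\<in>Dov G Ro r. \<not> pl_sat val (body rj)))"
    and "snd (transl G Ro r) = head r"
proof -
  have fin: "finite (Dov G Ro r)" using assms unfolding Dov_def by auto
  have "\<exists>xs. set xs = Dov G Ro r \<and> distinct xs" using finite_distinct_list[OF fin] .
  then have s: "set (SOME xs. set xs = Dov G Ro r \<and> distinct xs) = Dov G Ro r"
    by (rule conjunct1[OF someI_ex])
  show "pl_sat val (fst (transl G Ro r)) =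
     (pl_sat val (body r) \<and> (\<forall>rj\<in>Dov G Ro r. \<not> pl_sat val (body rj)))"
    unfolding transl_def using s by (auto simp: foldr_sat)
  show "snd (transl G Ro r) = head r" unfolding transl_def by auto
qed

lemma maxf_ne:
  assumes "finite N" "pl_consistent (out4p {} a \<union> C)"
  shows "\<exists>H. H \<in> maxf N a C"
proof -
  let ?S = "{H. H \<subseteq> N \<and> pl_consistent (out4p H a \<union> C)}"
  have "?S \<subseteq> Pow N" by auto
  then have "finite ?S" using assms(1) by (meson finite_Pow_iff finite_subset)
  moreover have "{} \<in> ?S" using assms(2) by auto
  ultimately obtain m where m: "m \<in> ?S" "\<forall>b\<in>?S. m \<le> b \<longrightarrow> m = b"
    using finite_has_maximal[of ?S] by blast
  then have "m \<in> maxf N a C" unfolding maxf_def by auto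
  then show ?thesis by blast
qed

theorem theorem4:
  fixes Ro :: "'p obl set" and a x :: "'p form"
    and W :: "'w set" and v :: "'w \<Rightarrow> 'p \<Rightarrow> bool" and w :: 'w
  assumes "finite Ro"
    and "x \<in> \<Inter> (outf (transl_set {Dia (embed a)} Ro) a {a})"
    and "W \<noteq> {}" and "replete W v"
    and "w \<in> W" and "\<forall>g\<in>{Dia (embed a)}. mtrue W v w g"
  shows "obl_true {Dia (embed a)} Ro W v w (a, x)"
proof -
  let ?G = "{Dia (embed a)}"
  let ?N = "transl_set ?G Ro"
  obtain u0 where u0: "u0 \<in> W" "pl_sat (v u0) a"
    using assms(6) by (auto simp: Dia_def embed_sat)
  have "pl_consistent (out4p {} a \<union> {a})"
    unfolding pl_consistent_def out4p_def pl_entails_def mat_def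
    using u0 by (intro exI[of _ "v u0"]) auto
  then obtain H where H: "H \<in> maxf ?N a {a}"
    using maxf_ne[of ?N] assms(1) unfolding transl_set_def by blast
  have xH: "x \<in> out4p H a" using assms(2) H unfolding outf_def by auto
  have HN: "H \<subseteq> ?N" using H unfolding maxf_def by auto
  have finH: "finite H" using HN assms(1) unfolding transl_set_def
    by (meson finite_imageI finite_subset)
  have "pl_consistent (out4p H a \<union> {a})" using H unfolding maxf_def by auto
  then obtain val where val: "\<forall>y\<in>out4p H a \<union> {a}. pl_sat val y"
    unfolding pl_consistent_def by auto
  have matsub: "mat H \<subseteq> out4p H a" unfolding out4p_def pl_entails_def by auto
  obtain xs where xs: "set xs = mat H" using finite_list[of "mat H"] finH
    unfolding mat_def by blast
  have "pl_consistent {conjl xs a}" unfolding pl_consistent_def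
    using val matsub xs by (intro exI[of _ val]) (auto simp: conjl_sat)
  then obtain u' where u': "u' \<in> W" "pl_sat (v u') (conjl xs a)"
    using assms(4) unfolding replete_def by blast
  have u'a: "pl_sat (v u') a" and u'm: "\<forall>y\<in>mat H. pl_sat (v u') y"
    using u' xs by (auto simp: conjl_sat)
  have u'x: "pl_sat (v u') x" using xH u'a u'm unfolding out4p_def pl_entails_def by auto
  have key: "\<not> geI ?G Ro v u u'" if u: "u \<in> W" "pl_sat (v u) a" "\<not> pl_sat (v u) x" for u
  proof
    assume ge: "geI ?G Ro v u u'"
    have "\<forall>y\<in>mat H. pl_sat (v u) y"
    proof
      fix y assume "y \<in> mat H"
      then obtain b h where bh: "(b, h) \<in> H" "y = Imp b h" unfolding mat_def by auto
      then obtain r where r: "r \<in> Ro" "transl ?G Ro r = (b, h)"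
        using HN unfolding transl_set_def by auto
      have hb: "h = head r" using transl_sat(2)[OF assms(1), of ?G r] r by simp
      have bs: "\<And>val. pl_sat val b =
           (pl_sat val (body r) \<and> (\<forall>rj\<in>Dov ?G Ro r. \<not> pl_sat val (body rj)))"
        using transl_sat(1)[OF assms(1), of _ ?G r] r by simp
      have "pl_sat (v u) h" if bt: "pl_sat (v u) b"
      proof (rule ccontr)
        assume nh: "\<not> pl_sat (v u) h"
        have "r \<in> Vset ?G Ro (v u)" using bt bs nh hb r(1)
          unfolding Vset_def Dov_def by auto
        then have "r \<in> Vset ?G Ro (v u')" using ge unfolding geI_def by auto
        then have "pl_sat (v u') b" "\<not> pl_sat (v u') h"
          using bs hb unfolding Vset_def Dov_def by auto
        moreover have "Imp b h \<in> mat H" using bh(1) unfolding mat_def by force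
        ultimately show False using u'm by fastforce
      qed
      then show "pl_sat (v u) y" using bh by simp
    qed
    then have "pl_sat (v u) x" using xH u(2) unfolding out4p_def pl_entails_def by auto
    then show False using u(3) by simp
  qed
  show ?thesis
    unfolding obl_true_def strong_ge_def maxrel_def geN_def ext_def body_def head_def
    using u' u'a u'x key by auto
qed

end
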